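(* Let $\mathbb{K}$ be a field, $n>1$, $a=\sum_{j=0}^d c_j s^j\in\mathbb{K}[s]^n$ a non-zero row vector of degree $d$, and $A\in\mathbb{K}^{(2d+1)\times n(d+1)}$ the matrix whose $(i,\,kn+r)$ entry ($1\le i\le 2d+1$, $0\le k\le d$, $1\le r\le n$) is the $r$-th entry of $c_{i-1-k}$ (zero if $i-1-k\notin\{0,\dots,d\}$). Let $p$, $q$, $\tilde q$, $b_i$ ($i\in q$) be as in the context. Then for any $\iota\in\tilde q$ and any integer $k$ with $0\le k\le\left\lfloor\frac{n(d+1)-\iota}{n}\right\rfloor$, $$b_{\iota+kn}^\flat=s^k\,b_\iota^\flat+\sum_{\{j\in p\,\mid\, j<\iota,\ j+kn\in q\}}\alpha_j\,b_{j+kn}^\flat,$$ where the constants $\alpha_j\in\mathbb{K}$ are those in the expression $A_{*\iota}=\sum_{\{j\in p\mid j<\iota\}}\alpha_jA_{*j}$ of the $\iota$-th column of $A$ as a linear combination of the preceding pivotal columns.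
   Context: $A_{*j}$ is the $j$-th column of $A$. A column of a matrix is pivotal if it is either the first column and non-zero, or linearly independent of all previous columns; otherwise non-pivotal. $p$ is the set of pivotal indices of $A$, $q$ the set of non-pivotal indices, and $\tilde q=\{\min\varrho\mid\varrho\in q/(n)\}$ the set of basic non-pivotal indices (minimal elements of the classes of $q$ modulo $n$). Every non-pivotal column $A_{*i}$ is uniquely a linear combination $A_{*i}=\sum_{\{j\in p\mid j<i\}}\alpha^{(i)}_jA_{*j}$ of preceding pivotal columns. Define $V\in\mathbb{K}^{n(d+1)\times n(d+1)}$ with columns $v_i$: for $i\in p$, $v_i=e_i$; for $i\in q$, $v_i=\sum_{\{j\in p\mid j<i\}}\alpha^{(i)}_j e_j$, where $e_i$ is the $i$-th standard basis vector. For $i\in q$, $b_i=e_i-v_i$. For $v\in\mathbb{K}^{n(d+1)}$ in blocks $v=[w_0;\dots;w_d]$ with $w_i\in\mathbb{K}^n$, $v^\flat=\sum_{i=0}^d s^i w_i\in\mathbb{K}[s]^n$. *)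

theory Defs
  imports "HOL-Computational_Algebra.Polynomial"
begin

(* A row vector a in K[s]^n is a function a :: nat => 'a poly, entries a 1, ..., a n.
   Its coefficient vectors are c_j = (coeff (a 1) j, ..., coeff (a n) j).
   Indices of rows and columns of A are 1-based as in the paper; N = n*(d+1). *)

definition vdeg :: "nat \<Rightarrow> (nat \<Rightarrow> 'a::zero poly) \<Rightarrow> nat" where
  "vdeg n a = Max ((\<lambda>r. degree (a r)) ` {1..n})"

definition Amat :: "nat \<Rightarrow> nat \<Rightarrow> (nat \<Rightarrow> 'a::zero poly) \<Rightarrow> nat \<Rightarrow> nat \<Rightarrow> 'a" where
  "Amat n d a i j =
     (let k = (j - 1) div n; r = (j - 1) mod n + 1
      in if 1 \<le> i \<and> k \<le> i - 1 \<and> i - 1 - k \<le> d then coeff (a r) (i - 1 - k) else 0)"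

definition colA :: "nat \<Rightarrow> nat \<Rightarrow> (nat \<Rightarrow> 'a::zero poly) \<Rightarrow> nat \<Rightarrow> nat \<Rightarrow> 'a" where
  "colA n d a j = (\<lambda>i. if 1 \<le> i \<and> i \<le> 2 * d + 1 then Amat n d a i j else 0)"

(* pivotal: not a linear combination of the previous columns
   (for j = 1 this says: the first column is non-zero) *)
definition pivotal :: "nat \<Rightarrow> nat \<Rightarrow> (nat \<Rightarrow> 'a::field poly) \<Rightarrow> nat \<Rightarrow> bool" where
  "pivotal n d a j \<longleftrightarrow> 1 \<le> j \<and> j \<le> n * (d + 1) \<and>
     \<not> (\<exists>f. colA n d a j = (\<lambda>i. \<Sum>l\<in>{1..<j}. f l * colA n d a l i))"

definition piv :: "nat \<Rightarrow> nat \<Rightarrow> (nat \<Rightarrow> 'a::field poly) \<Rightarrow> nat set" where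
  "piv n d a = {j. pivotal n d a j}"

definition nonpiv :: "nat \<Rightarrow> nat \<Rightarrow> (nat \<Rightarrow> 'a::field poly) \<Rightarrow> nat set" where
  "nonpiv n d a = {1..n * (d + 1)} - piv n d a"

definition basic_nonpiv :: "nat \<Rightarrow> nat \<Rightarrow> (nat \<Rightarrow> 'a::field poly) \<Rightarrow> nat set" where
  "basic_nonpiv n d a =
     {\<iota> \<in> nonpiv n d a. \<forall>j \<in> nonpiv n d a. j mod n = \<iota> mod n \<longrightarrow> \<iota> \<le> j}"

definition alpha :: "nat \<Rightarrow> nat \<Rightarrow> (nat \<Rightarrow> 'a::field poly) \<Rightarrow> nat \<Rightarrow> nat \<Rightarrow> 'a" where
  "alpha n d a i = (THE f. (\<forall>j. f j \<noteq> 0 \<longrightarrow> j \<in> piv n d a \<and> j < i) \<and>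
      colA n d a i = (\<lambda>m. \<Sum>j\<in>{j \<in> piv n d a. j < i}. f j * colA n d a j m))"

definition evec :: "nat \<Rightarrow> nat \<Rightarrow> 'a::field" where
  "evec i = (\<lambda>m. if m = i then 1 else 0)"

definition vcol :: "nat \<Rightarrow> nat \<Rightarrow> (nat \<Rightarrow> 'a::field poly) \<Rightarrow> nat \<Rightarrow> nat \<Rightarrow> 'a" where
  "vcol n d a i = (if i \<in> piv n d a then evec i
     else (\<lambda>m. \<Sum>j\<in>{j \<in> piv n d a. j < i}. alpha n d a i j * evec j m))"

definition bvec :: "nat \<Rightarrow> nat \<Rightarrow> (nat \<Rightarrow> 'a::field poly) \<Rightarrow> nat \<Rightarrow> nat \<Rightarrow> 'a" where
  "bvec n d a i = (\<lambda>m. evec i m - vcol n d a i m)"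

definition flat :: "nat \<Rightarrow> nat \<Rightarrow> (nat \<Rightarrow> 'a::comm_monoid_add) \<Rightarrow> nat \<Rightarrow> 'a poly" where
  "flat n d v = (\<lambda>r. if 1 \<le> r \<and> r \<le> n then (\<Sum>k\<le>d. monom (v (k * n + r)) k) else 0)"

end

theory Submission
  imports Defs
begin

lemma xpow_monom: "([:0, 1:] :: 'a::comm_ring_1 poly) ^ k = monom 1 k"
  by (simp add: monom_altdef)

lemma coeff_flat:
  "coeff (flat n d v r) t = (if 1 \<le> r \<and> r \<le> n \<and> t \<le> d then v (t * n + r) else 0)"
  by (auto simp: flat_def coeff_sum)

lemma flat_add: "flat n d (\<lambda>m. u m + v m) r = flat n d u r + flat n d v r"
  by (rule poly_eqI) (simp add: coeff_flat)

lemma flat_smult: "flat n d (\<lambda>m. c * v m) r = smult c (flat n d v r)"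
  by (rule poly_eqI) (simp add: coeff_flat)

lemma flat_sum: "flat n d (\<lambda>m. \<Sum>j\<in>S. f j m) r = (\<Sum>j\<in>S. flat n d (f j) r)"
  by (rule poly_eqI) (auto simp add: coeff_flat coeff_sum)

lemma flat_shift:
  fixes v :: "nat \<Rightarrow> 'a::comm_ring_1"
  assumes "0 < n" and "\<And>m. m > n * (d + 1) - k * n \<Longrightarrow> v m = 0"
  shows "flat n d (\<lambda>m. if k * n < m then v (m - k * n) else 0) r = [:0, 1:] ^ k * flat n d v r"
proof (rule poly_eqI)
  fix t
  show "coeff (flat n d (\<lambda>m. if k * n < m then v (m - k * n) else 0) r) t =
        coeff ([:0, 1:] ^ k * flat n d v r) t"
  proof (cases "1 \<le> r \<and> r \<le> n")
    case False
    then show ?thesis by (auto simp add: xpow_monom coeff_monom_mult coeff_flat)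
  next
    case True
    show ?thesis
    proof (cases "k \<le> t")
      case False
      have "(t+1) * n \<le> k * n" using False by (intro mult_le_mono1) simp
      then have "t * n + r \<le> k * n" using True by simp
      then show ?thesis using False True by (simp add: xpow_monom coeff_monom_mult coeff_flat)
    next
      case kt: True
      have e1: "t * n + r - k * n = (t - k) * n + r"
        using kt by (simp add: diff_mult_distrib)
      have "k * n \<le> t * n" using kt by simp
      then have e2: "k * n < t * n + r" using True by linarith
      show ?thesis
      proof (cases "t \<le> d")
        case True
        then show ?thesis using kt e1 e2 \<open>1 \<le> r \<and> r \<le> n\<close>
          by (simp add: xpow_monom coeff_monom_mult coeff_flat)
      next
        case False
        have "(d+1) * n \<le> t * n" using False by (intro mult_le_mono1) simp
        moreover have "(t-k)*n + k*n = t*n" using kt by (metis add_mult_distrib le_add_diff_inverse2)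
        ultimately have "(t - k) * n + r > n * (d + 1) - k * n" using True
          by (simp only: mult.commute[of n]) linarith
        then have "v ((t - k) * n + r) = 0" using assms(2) by blast
        then show ?thesis using False kt e1 e2 True
          by (simp add: xpow_monom coeff_monom_mult coeff_flat)
      qed
    qed
  qed
qed


lemma div_shift:
  assumes "0 < (n::nat)" "1 \<le> j"
  shows "(j + k * n - 1) div n = (j - 1) div n + k" "(j + k * n - 1) mod n = (j - 1) mod n"
proof -
  obtain i where j: "j = Suc i" using assms(2) by (cases j) auto
  show "(j + k * n - 1) div n = (j - 1) div n + k" "(j + k * n - 1) mod n = (j - 1) mod n"
    using assms(1) unfolding j by simp_all
qed

lemma col_shift:
  assumes "0 < n" "1 \<le> j" "j + k * n \<le> n * (d + 1)"
  shows "colA n d a (j + k * n) m = (if k \<le> m then colA n d a j (m - k) else 0)"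
proof -
  define K where "K = (j - 1) div n"
  have d1: "(j + k * n - 1) div n = K + k" and d2: "(j + k * n - 1) mod n = (j - 1) mod n"
    using div_shift[OF assms(1,2)] K_def by auto
  have "(j + k * n - 1) div n < d + 1"
    using assms by (simp add: less_mult_imp_div_less mult.commute)
  then have Kk: "K + k \<le> d" using d1 by simp
  show ?thesis
    unfolding colA_def Amat_def Let_def d1 d2 K_def[symmetric]
    using Kk by (auto simp: add.commute)
qed


lemma piv_range: "j \<in> piv n d a \<Longrightarrow> 1 \<le> j \<and> j \<le> n * (d + 1)"
  by (simp add: piv_def pivotal_def)

lemma indep:
  assumes fin: "finite S" and SP: "S \<subseteq> piv n d a"
    and z: "\<And>m. (\<Sum>l\<in>S. g l * colA n d a l m) = 0"
  shows "\<forall>l\<in>S. g l = 0"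
proof (rule ccontr)
  assume "\<not> (\<forall>l\<in>S. g l = 0)"
  define T where "T = {l\<in>S. g l \<noteq> 0}"
  have fT: "finite T" and neT: "T \<noteq> {}" using fin \<open>\<not> (\<forall>l\<in>S. g l = 0)\<close> by (auto simp: T_def)
  define j where "j = Max T"
  have jT: "j \<in> T" using fT neT j_def by simp
  have lt: "\<forall>l\<in>T-{j}. l < j" using fT j_def by (metis DiffE Max_ge insertI1 order_le_neq_trans)
  have jP: "j \<in> piv n d a" using jT SP T_def by auto
  have gj: "g j \<noteq> 0" using jT T_def by simp
  have sumT: "(\<Sum>l\<in>S. g l * colA n d a l m) = (\<Sum>l\<in>T. g l * colA n d a l m)" for m
    by (rule sum.mono_neutral_right) (auto simp: T_def fin)
  have eq: "g j * colA n d a j m + (\<Sum>l\<in>T-{j}. g l * colA n d a l m) = 0" for m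
    using z[of m] sumT[of m] sum.remove[OF fT jT, of "\<lambda>l. g l * colA n d a l m"] by simp
  define f where "f l = (if l \<in> T - {j} then - g l / g j else 0)" for l
  have "colA n d a j = (\<lambda>i. \<Sum>l\<in>{1..<j}. f l * colA n d a l i)"
  proof (rule ext)
    fix i
    have sub: "T - {j} \<subseteq> {1..<j}" using lt SP T_def piv_range by fastforce
    have "(\<Sum>l\<in>{1..<j}. f l * colA n d a l i) = (\<Sum>l\<in>T-{j}. f l * colA n d a l i)"
      by (rule sum.mono_neutral_right) (use sub in \<open>auto simp: f_def\<close>)
    also have "\<dots> = (\<Sum>l\<in>T-{j}. - (g l * colA n d a l i) / g j)"
      by (rule sum.cong) (auto simp: f_def)
    also have "\<dots> = - (\<Sum>l\<in>T-{j}. g l * colA n d a l i) / g j"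
      by (simp add: sum_divide_distrib sum_negf)
    also have "\<dots> = colA n d a j i" using eq[of i] gj
      by (simp add: field_simps) (metis add.commute add_eq_0_iff mult.commute)
    finally show "colA n d a j i = (\<Sum>l\<in>{1..<j}. f l * colA n d a l i)" by simp
  qed
  then show False using jP by (auto simp: piv_def pivotal_def)
qed


lemma span:
  assumes "1 \<le> j" "j \<le> n * (d + 1)"
  shows "\<exists>g. (\<forall>l. g l \<noteq> 0 \<longrightarrow> l \<in> piv n d a \<and> l \<le> j) \<and>
     (\<forall>m. colA n d a j m = (\<Sum>l\<in>{1..n * (d + 1)}. g l * colA n d a l m))"
  using assms
proof (induction j rule: less_induct)
  case (less j)
  show ?case
  proof (cases "j \<in> piv n d a")
    case True
    have "(\<Sum>l\<in>{1..n * (d + 1)}. (if l = j then 1 else 0) * colA n d a l m) = colA n d a j m" for m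
    proof -
      have "(\<Sum>l\<in>{1..n * (d + 1)}. (if l = j then 1 else 0) * colA n d a l m) =
        (\<Sum>l\<in>{1..n * (d + 1)}. (if l = j then colA n d a l m else 0))"
        by (rule sum.cong) auto
      also have "\<dots> = colA n d a j m" using less.prems by (simp add: sum.delta)
      finally show ?thesis .
    qed
    then show ?thesis
      by (intro exI[of _ "\<lambda>l. if l = j then 1 else 0"]) (use True in simp)
  next
    case False
    then obtain f where f: "colA n d a j = (\<lambda>i. \<Sum>l\<in>{1..<j}. f l * colA n d a l i)"
      using less.prems by (auto simp: piv_def pivotal_def)
    have "\<forall>l\<in>{1..<j}. \<exists>g. (\<forall>t. g t \<noteq> 0 \<longrightarrow> t \<in> piv n d a \<and> t \<le> l) \<and>
     (\<forall>m. colA n d a l m = (\<Sum>t\<in>{1..n * (d + 1)}. g t * colA n d a t m))"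
    proof
      fix l assume l: "l \<in> {1..<j}"
      then show "\<exists>g. (\<forall>t. g t \<noteq> 0 \<longrightarrow> t \<in> piv n d a \<and> t \<le> l) \<and>
     (\<forall>m. colA n d a l m = (\<Sum>t\<in>{1..n * (d + 1)}. g t * colA n d a t m))"
        using less.prems by (intro less.IH) auto
    qed
    then have "\<exists>G. \<forall>l\<in>{1..<j}. (\<forall>t. G l t \<noteq> 0 \<longrightarrow> t \<in> piv n d a \<and> t \<le> l) \<and>
     (\<forall>m. colA n d a l m = (\<Sum>t\<in>{1..n * (d + 1)}. G l t * colA n d a t m))"
      by (rule bchoice)
    then obtain G where G0: "\<forall>l\<in>{1..<j}. (\<forall>t. G l t \<noteq> 0 \<longrightarrow> t \<in> piv n d a \<and> t \<le> l) \<and>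
     (\<forall>m. colA n d a l m = (\<Sum>t\<in>{1..n * (d + 1)}. G l t * colA n d a t m))"
      by (elim exE)
    note G = bspec[OF G0]
    define g where "g t = (\<Sum>l\<in>{1..<j}. f l * G l t)" for t
    have supp: "g t \<noteq> 0 \<longrightarrow> t \<in> piv n d a \<and> t \<le> j" for t
    proof
      assume "g t \<noteq> 0"
      then obtain l where "l \<in> {1..<j}" "f l * G l t \<noteq> 0" unfolding g_def
        by (rule sum.not_neutral_contains_not_neutral)
      then show "t \<in> piv n d a \<and> t \<le> j" using conjunct1[OF G[of l]] by auto
    qed
    have "colA n d a j m = (\<Sum>t\<in>{1..n * (d + 1)}. g t * colA n d a t m)" for m
    proof -
      have "colA n d a j m = (\<Sum>l\<in>{1..<j}. f l * (\<Sum>t\<in>{1..n * (d + 1)}. G l t * colA n d a t m))"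
      proof -
        have "colA n d a j m = (\<Sum>l\<in>{1..<j}. f l * colA n d a l m)" using fun_cong[OF f, of m] by simp
        also have "\<dots> = (\<Sum>l\<in>{1..<j}. f l * (\<Sum>t\<in>{1..n * (d + 1)}. G l t * colA n d a t m))"
        proof (rule sum.cong[OF refl])
          fix x assume "x \<in> {1..<j}"
          then have "colA n d a x m = (\<Sum>t\<in>{1..n * (d + 1)}. G x t * colA n d a t m)" using G by blast
          then show "f x * colA n d a x m = f x * (\<Sum>t\<in>{1..n * (d + 1)}. G x t * colA n d a t m)"
            by (rule arg_cong)
        qed
        finally show ?thesis .
      qed
      also have "\<dots> = (\<Sum>l\<in>{1..<j}. \<Sum>t\<in>{1..n * (d + 1)}. f l * G l t * colA n d a t m)"
        by (simp add: sum_distrib_left mult.assoc)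
      also have "\<dots> = (\<Sum>t\<in>{1..n * (d + 1)}. \<Sum>l\<in>{1..<j}. f l * G l t * colA n d a t m)"
        by (rule sum.swap)
      also have "\<dots> = (\<Sum>t\<in>{1..n * (d + 1)}. g t * colA n d a t m)"
        by (simp add: g_def sum_distrib_right)
      finally show ?thesis .
    qed
    then show ?thesis using supp by blast
  qed
qed

lemma uniq_rep:
  assumes "\<forall>j. f1 j \<noteq> 0 \<longrightarrow> j \<in> piv n d a \<and> j < i"
    and "\<forall>j. f2 j \<noteq> 0 \<longrightarrow> j \<in> piv n d a \<and> j < i"
    and "colA n d a i = (\<lambda>m. \<Sum>j\<in>{j \<in> piv n d a. j < i}. f1 j * colA n d a j m)"
    and "colA n d a i = (\<lambda>m. \<Sum>j\<in>{j \<in> piv n d a. j < i}. f2 j * colA n d a j m)"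
  shows "f1 = f2"
proof -
  have "(\<Sum>j\<in>{j \<in> piv n d a. j < i}. (f1 j - f2 j) * colA n d a j m) = 0" for m
    using fun_cong[OF assms(3), of m] fun_cong[OF assms(4), of m]
    by (simp add: left_diff_distrib sum_subtractf)
  then have "\<forall>l\<in>{j \<in> piv n d a. j < i}. f1 l - f2 l = 0"
    by (intro indep) auto
  then show ?thesis
  proof (intro ext)
    fix l
    show "f1 l = f2 l"
    proof (cases "l \<in> piv n d a \<and> l < i")
      case True
      then show ?thesis using \<open>\<forall>l\<in>{j \<in> piv n d a. j < i}. f1 l - f2 l = 0\<close> by auto
    next
      case False
      then have "f1 l = 0" "f2 l = 0" using assms(1,2) by auto
      then show ?thesis by simp
    qed
  qed
qed

lemma alpha_props:
  assumes "1 \<le> i" "i \<le> n * (d + 1)" "i \<notin> piv n d a"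
  shows "(\<forall>j. alpha n d a i j \<noteq> 0 \<longrightarrow> j \<in> piv n d a \<and> j < i) \<and>
    colA n d a i = (\<lambda>m. \<Sum>j\<in>{j \<in> piv n d a. j < i}. alpha n d a i j * colA n d a j m)"
proof -
  obtain g where g: "\<forall>l. g l \<noteq> 0 \<longrightarrow> l \<in> piv n d a \<and> l \<le> i"
     "\<forall>m. colA n d a i m = (\<Sum>l\<in>{1..n * (d + 1)}. g l * colA n d a l m)"
    using span[OF assms(1,2)] by blast
  have g1: "\<forall>l. g l \<noteq> 0 \<longrightarrow> l \<in> piv n d a \<and> l < i" using g(1) assms(3)
    using le_neq_implies_less by blast
  have "colA n d a i = (\<lambda>m. \<Sum>j\<in>{j \<in> piv n d a. j < i}. g j * colA n d a j m)"
  proof (rule ext)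
    fix m
    have "(\<Sum>l\<in>{1..n * (d + 1)}. g l * colA n d a l m) = (\<Sum>j\<in>{j \<in> piv n d a. j < i}. g j * colA n d a j m)"
      by (rule sum.mono_neutral_right) (use g1 in \<open>auto dest: piv_range\<close>)
    then show "colA n d a i m = (\<Sum>j\<in>{j \<in> piv n d a. j < i}. g j * colA n d a j m)"
      using g(2) by simp
  qed
  then have ex: "\<exists>!f. (\<forall>j. f j \<noteq> 0 \<longrightarrow> j \<in> piv n d a \<and> j < i) \<and>
      colA n d a i = (\<lambda>m. \<Sum>j\<in>{j \<in> piv n d a. j < i}. f j * colA n d a j m)"
    using g1 uniq_rep by blast
  show ?thesis unfolding alpha_def by (rule theI'[OF ex])
qed

lemma alpha_eq:
  assumes "1 \<le> i" "i \<le> n * (d + 1)" "i \<notin> piv n d a"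
    and "\<forall>j. f j \<noteq> 0 \<longrightarrow> j \<in> piv n d a \<and> j < i"
    and "colA n d a i = (\<lambda>m. \<Sum>j\<in>{j \<in> piv n d a. j < i}. f j * colA n d a j m)"
  shows "alpha n d a i = f"
  using alpha_props[OF assms(1-3)] assms(4,5) uniq_rep by blast

lemma bvec_np:
  assumes "1 \<le> i" "i \<le> n * (d + 1)" "i \<notin> piv n d a"
  shows "bvec n d a i m = evec i m - alpha n d a i m"
proof -
  have s: "\<forall>j. alpha n d a i j \<noteq> 0 \<longrightarrow> j \<in> piv n d a \<and> j < i" using alpha_props[OF assms] by blast
  have "(\<Sum>j\<in>{j \<in> piv n d a. j < i}. alpha n d a i j * evec j m) = alpha n d a i m"
  proof -
    have "(\<Sum>j\<in>{j \<in> piv n d a. j < i}. alpha n d a i j * evec j m) =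
        (\<Sum>j\<in>{j \<in> piv n d a. j < i}. if m = j then alpha n d a i j else 0)"
      by (rule sum.cong) (auto simp: evec_def)
    also have "\<dots> = (if m \<in> {j \<in> piv n d a. j < i} then alpha n d a i m else 0)"
    proof -
      have fin: "finite {j \<in> piv n d a. j < i}" by simp
      show ?thesis using sum.delta'[OF fin, of m "alpha n d a i"] by simp
    qed
    also have "\<dots> = alpha n d a i m" using s by auto
    finally show ?thesis .
  qed
  then show ?thesis using assms(3) by (simp add: bvec_def vcol_def)
qed


theorem lemma8:
  fixes a :: "nat \<Rightarrow> 'a::field poly" and n d \<iota> k :: nat
  assumes "n > 1"
    and "\<exists>r\<in>{1..n}. a r \<noteq> 0"
    and "vdeg n a = d"
    and "\<iota> \<in> basic_nonpiv n d a"
    and "k \<le> (n * (d + 1) - \<iota>) div n"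
  shows "flat n d (bvec n d a (\<iota> + k * n)) =
    (\<lambda>r. [:0, 1:] ^ k * flat n d (bvec n d a \<iota>) r
        + (\<Sum>j\<in>{j \<in> piv n d a. j < \<iota> \<and> j + k * n \<in> nonpiv n d a}.
             smult (alpha n d a \<iota> j) (flat n d (bvec n d a (j + k * n)) r)))"
proof -
  have n0: "0 < n" using assms(1) by simp
  have iq: "\<iota> \<in> nonpiv n d a" using assms(4) by (simp add: basic_nonpiv_def)
  hence i1: "1 \<le> \<iota>" "\<iota> \<le> n * (d + 1)" "\<iota> \<notin> piv n d a" by (auto simp: nonpiv_def)
  have "k * n \<le> (n * (d + 1) - \<iota>) div n * n" using assms(5) by (rule mult_le_mono1)
  also have "\<dots> \<le> n * (d + 1) - \<iota>" by simp
  finally have kn: "k * n \<le> n * (d + 1) - \<iota>" .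
  define i' where "i' = \<iota> + k * n"
  have i'1: "1 \<le> i'" "i' \<le> n * (d + 1)" using i1 kn by (auto simp: i'_def)
  define \<alpha> where "\<alpha> = alpha n d a \<iota>"
  define J where "J = {j \<in> piv n d a. j < \<iota>}"
  have finJ: "finite J" by (simp add: J_def)
  have \<alpha>s: "\<forall>j. \<alpha> j \<noteq> 0 \<longrightarrow> j \<in> piv n d a \<and> j < \<iota>"
    and \<alpha>c: "colA n d a \<iota> = (\<lambda>m. \<Sum>j\<in>J. \<alpha> j * colA n d a j m)"
    using alpha_props[OF i1] by (auto simp: \<alpha>_def J_def)
  have Jr: "1 \<le> j \<and> j + k * n \<le> n * (d + 1) \<and> j + k * n < i'" if "j \<in> J" for j
    using that piv_range[of j n d a] i1 kn by (auto simp: J_def i'_def)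
  have coli': "colA n d a i' m = (\<Sum>j\<in>J. \<alpha> j * colA n d a (j + k * n) m)" for m
  proof -
    have "colA n d a i' m = (if k \<le> m then colA n d a \<iota> (m - k) else 0)"
      unfolding i'_def by (rule col_shift[OF n0 i1(1)]) (use i'1 in \<open>simp add: i'_def\<close>)
    also have "\<dots> = (\<Sum>j\<in>J. \<alpha> j * (if k \<le> m then colA n d a j (m - k) else 0))"
      using fun_cong[OF \<alpha>c, of "m - k"] by simp
    also have "\<dots> = (\<Sum>j\<in>J. \<alpha> j * colA n d a (j + k * n) m)"
    proof (rule sum.cong[OF refl])
      fix x assume x: "x \<in> J"
      have "colA n d a (x + k * n) m = (if k \<le> m then colA n d a x (m - k) else 0)"
        by (rule col_shift[OF n0]) (use Jr[OF x] in auto)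
      then show "\<alpha> x * (if k \<le> m then colA n d a x (m - k) else 0) = \<alpha> x * colA n d a (x + k * n) m"
        by simp
    qed
    finally show ?thesis .
  qed
  define c where "c j t = (if j + k * n \<in> piv n d a then (if t = j + k * n then 1 else 0)
      else alpha n d a (j + k * n) t)" for j t
  define T where "T = {t \<in> piv n d a. t < i'}"
  have finT: "finite T" by (simp add: T_def)
  have csupp: "c j t \<noteq> 0 \<Longrightarrow> t \<in> piv n d a \<and> t < i'" if "j \<in> J" for j t
  proof (cases "j + k * n \<in> piv n d a")
    case True
    then show "c j t \<noteq> 0 \<Longrightarrow> t \<in> piv n d a \<and> t < i'" using Jr[OF that]
      by (auto simp: c_def split: if_splits)
  next
    case False
    have "1 \<le> j + k * n" "j + k * n \<le> n * (d + 1)" using Jr[OF that] by auto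
    from alpha_props[OF this False]
    show "c j t \<noteq> 0 \<Longrightarrow> t \<in> piv n d a \<and> t < i'" using Jr[OF that] False
      by (auto simp: c_def)
  qed
  have crep: "colA n d a (j + k * n) m = (\<Sum>t\<in>T. c j t * colA n d a t m)" if "j \<in> J" for j m
  proof (cases "j + k * n \<in> piv n d a")
    case True
    have mem: "j + k * n \<in> T" using True Jr[OF that] by (simp add: T_def)
    have "(\<Sum>t\<in>T. c j t * colA n d a t m) = (\<Sum>t\<in>T. if t = j + k * n then colA n d a t m else 0)"
      by (rule sum.cong[OF refl]) (simp add: c_def True)
    also have "\<dots> = colA n d a (j + k * n) m" using mem finT by (simp add: sum.delta)
    finally show ?thesis by simp
  next
    case False
    have r: "1 \<le> j + k * n" "j + k * n \<le> n * (d + 1)" using Jr[OF that] by auto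
    note ap = alpha_props[OF r False]
    have "colA n d a (j + k * n) m =
        (\<Sum>t\<in>{t \<in> piv n d a. t < j + k * n}. alpha n d a (j + k * n) t * colA n d a t m)"
      using fun_cong[OF conjunct2[OF ap], of m] by simp
    also have "\<dots> = (\<Sum>t\<in>T. alpha n d a (j + k * n) t * colA n d a t m)"
      by (rule sum.mono_neutral_left) (use finT Jr[OF that] conjunct1[OF ap] in \<open>auto simp: T_def\<close>)
    also have "\<dots> = (\<Sum>t\<in>T. c j t * colA n d a t m)"
      by (simp add: c_def False)
    finally show ?thesis .
  qed
  define \<beta> where "\<beta> t = (\<Sum>j\<in>J. \<alpha> j * c j t)" for t
  have \<beta>supp: "\<forall>t. \<beta> t \<noteq> 0 \<longrightarrow> t \<in> piv n d a \<and> t < i'"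
  proof (intro allI impI)
    fix t assume "\<beta> t \<noteq> 0"
    then obtain j where "j \<in> J" "\<alpha> j * c j t \<noteq> 0" unfolding \<beta>_def
      by (rule sum.not_neutral_contains_not_neutral)
    then show "t \<in> piv n d a \<and> t < i'" using csupp by auto
  qed
  have col\<beta>: "colA n d a i' = (\<lambda>m. \<Sum>t\<in>T. \<beta> t * colA n d a t m)"
  proof (rule ext)
    fix m
    have "colA n d a i' m = (\<Sum>j\<in>J. \<alpha> j * (\<Sum>t\<in>T. c j t * colA n d a t m))"
      unfolding coli' by (rule sum.cong[OF refl]) (simp add: crep)
    also have "\<dots> = (\<Sum>j\<in>J. \<Sum>t\<in>T. \<alpha> j * c j t * colA n d a t m)"
      by (simp add: sum_distrib_left mult.assoc)
    also have "\<dots> = (\<Sum>t\<in>T. \<Sum>j\<in>J. \<alpha> j * c j t * colA n d a t m)"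
      by (rule sum.swap)
    also have "\<dots> = (\<Sum>t\<in>T. \<beta> t * colA n d a t m)"
      by (simp add: \<beta>_def sum_distrib_right)
    finally show "colA n d a i' m = (\<Sum>t\<in>T. \<beta> t * colA n d a t m)" .
  qed
  have i'np: "i' \<notin> piv n d a"
  proof
    assume "i' \<in> piv n d a"
    moreover have "colA n d a i' = (\<lambda>i. \<Sum>l\<in>{1..<i'}. \<beta> l * colA n d a l i)"
    proof (rule ext)
      fix i
      have "(\<Sum>l\<in>{1..<i'}. \<beta> l * colA n d a l i) = (\<Sum>t\<in>T. \<beta> t * colA n d a t i)"
        by (rule sum.mono_neutral_right) (use \<beta>supp in \<open>auto simp: T_def dest: piv_range\<close>)
      then show "colA n d a i' i = (\<Sum>l\<in>{1..<i'}. \<beta> l * colA n d a l i)"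
        using fun_cong[OF col\<beta>, of i] by simp
    qed
    ultimately show False by (auto simp: piv_def pivotal_def)
  qed
  have aeq: "alpha n d a i' = \<beta>"
    by (rule alpha_eq[OF i'1 i'np \<beta>supp]) (use col\<beta> in \<open>simp add: T_def\<close>)
  define J' where "J' = {j \<in> piv n d a. j < \<iota> \<and> j + k * n \<in> nonpiv n d a}"
  have J'J: "J' \<subseteq> J" by (auto simp: J'_def J_def)
  have J'iff: "j \<in> J' \<longleftrightarrow> j + k * n \<notin> piv n d a" if "j \<in> J" for j
    using that Jr[OF that] by (auto simp: J'_def J_def nonpiv_def)
  have V: "bvec n d a i' = (\<lambda>m. (if k * n < m then bvec n d a \<iota> (m - k * n) else 0)
      + (\<Sum>j\<in>J'. \<alpha> j * bvec n d a (j + k * n) m))"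
  proof (rule ext)
    fix m
    have E0: "(\<Sum>j\<in>J. \<alpha> j * evec (j + k * n) m) = (if k * n < m then \<alpha> (m - k * n) else 0)"
    proof (cases "k * n < m")
      case True
      have "(\<Sum>j\<in>J. \<alpha> j * evec (j + k * n) m) = (\<Sum>j\<in>J. if m - k * n = j then \<alpha> j else 0)"
        by (rule sum.cong[OF refl]) (use True in \<open>auto simp: evec_def\<close>)
      also have "\<dots> = (if m - k * n \<in> J then \<alpha> (m - k * n) else 0)"
        using sum.delta'[OF finJ, of "m - k * n" \<alpha>] by simp
      also have "\<dots> = \<alpha> (m - k * n)" using \<alpha>s by (auto simp: J_def)
      finally show ?thesis using True by simp
    next
      case False
      have "(\<Sum>j\<in>J. \<alpha> j * evec (j + k * n) m) = 0"
      proof (rule sum.neutral, rule ballI)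
        fix j assume "j \<in> J"
        then have "j + k * n \<noteq> m" using Jr[of j] False by auto
        then show "\<alpha> j * evec (j + k * n) m = 0" by (simp add: evec_def)
      qed
      then show ?thesis using False by simp
    qed
    have E1: "(if k * n < m then bvec n d a \<iota> (m - k * n) else 0)
        = evec i' m - (\<Sum>j\<in>J. \<alpha> j * evec (j + k * n) m)"
      unfolding E0 using i1 by (auto simp: bvec_np \<alpha>_def evec_def i'_def)
    have E2: "\<beta> m = (\<Sum>j\<in>J - J'. \<alpha> j * evec (j + k * n) m) + (\<Sum>j\<in>J'. \<alpha> j * alpha n d a (j + k * n) m)"
    proof -
      have "\<beta> m = (\<Sum>j\<in>J - J'. \<alpha> j * c j m) + (\<Sum>j\<in>J'. \<alpha> j * c j m)"
        unfolding \<beta>_def by (rule sum.subset_diff[OF J'J finJ])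
      also have "(\<Sum>j\<in>J - J'. \<alpha> j * c j m) = (\<Sum>j\<in>J - J'. \<alpha> j * evec (j + k * n) m)"
        by (rule sum.cong[OF refl]) (use J'iff in \<open>auto simp: c_def evec_def\<close>)
      also have "(\<Sum>j\<in>J'. \<alpha> j * c j m) = (\<Sum>j\<in>J'. \<alpha> j * alpha n d a (j + k * n) m)"
        by (rule sum.cong[OF refl]) (use J'iff J'J in \<open>auto simp: c_def\<close>)
      finally show ?thesis .
    qed
    have E3: "(\<Sum>j\<in>J. \<alpha> j * evec (j + k * n) m) =
       (\<Sum>j\<in>J - J'. \<alpha> j * evec (j + k * n) m) + (\<Sum>j\<in>J'. \<alpha> j * evec (j + k * n) m)"
      by (rule sum.subset_diff[OF J'J finJ])
    have E4: "(\<Sum>j\<in>J'. \<alpha> j * bvec n d a (j + k * n) m) =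
       (\<Sum>j\<in>J'. \<alpha> j * evec (j + k * n) m) - (\<Sum>j\<in>J'. \<alpha> j * alpha n d a (j + k * n) m)"
    proof -
      have "(\<Sum>j\<in>J'. \<alpha> j * bvec n d a (j + k * n) m) =
          (\<Sum>j\<in>J'. \<alpha> j * evec (j + k * n) m - \<alpha> j * alpha n d a (j + k * n) m)"
      proof (rule sum.cong[OF refl])
        fix j assume j: "j \<in> J'"
        then have jJ: "j \<in> J" using J'J by blast
        have "bvec n d a (j + k * n) m = evec (j + k * n) m - alpha n d a (j + k * n) m"
          by (rule bvec_np) (use Jr[OF jJ] J'iff[OF jJ] j in auto)
        then show "\<alpha> j * bvec n d a (j + k * n) m =
            \<alpha> j * evec (j + k * n) m - \<alpha> j * alpha n d a (j + k * n) m"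
          by (simp add: right_diff_distrib)
      qed
      then show ?thesis by (simp add: sum_subtractf)
    qed
    have "bvec n d a i' m = evec i' m - \<beta> m"
      using bvec_np[OF i'1 i'np] aeq by simp
    then show "bvec n d a i' m = (if k * n < m then bvec n d a \<iota> (m - k * n) else 0)
      + (\<Sum>j\<in>J'. \<alpha> j * bvec n d a (j + k * n) m)"
      unfolding E1 E4 E2 E3 by (simp add: algebra_simps)
  qed
  have bz: "bvec n d a \<iota> m = 0" if "m > n * (d + 1) - k * n" for m
  proof -
    have "m > \<iota>" using that kn i1 by linarith
    then show ?thesis using bvec_np[OF i1, of m] \<alpha>s by (auto simp: evec_def \<alpha>_def)
  qed
  show ?thesis
  proof (rule ext)
    fix r
    have "flat n d (bvec n d a (\<iota> + k * n)) r =
      flat n d (\<lambda>m. if k * n < m then bvec n d a \<iota> (m - k * n) else 0) r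
      + flat n d (\<lambda>m. \<Sum>j\<in>J'. \<alpha> j * bvec n d a (j + k * n) m) r"
      unfolding i'_def[symmetric] V by (rule flat_add)
    also have "flat n d (\<lambda>m. if k * n < m then bvec n d a \<iota> (m - k * n) else 0) r
        = [:0, 1:] ^ k * flat n d (bvec n d a \<iota>) r"
      by (rule flat_shift[OF n0 bz])
    also have "flat n d (\<lambda>m. \<Sum>j\<in>J'. \<alpha> j * bvec n d a (j + k * n) m) r
        = (\<Sum>j\<in>J'. flat n d (\<lambda>m. \<alpha> j * bvec n d a (j + k * n) m) r)"
      by (rule flat_sum)
    also have "\<dots> = (\<Sum>j\<in>J'. smult (\<alpha> j) (flat n d (bvec n d a (j + k * n)) r))"
      by (simp add: flat_smult)
    finally show "flat n d (bvec n d a (\<iota> + k * n)) r = [:0, 1:] ^ k * flat n d (bvec n d a \<iota>) r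
        + (\<Sum>j\<in>{j \<in> piv n d a. j < \<iota> \<and> j + k * n \<in> nonpiv n d a}.
             smult (alpha n d a \<iota> j) (flat n d (bvec n d a (j + k * n)) r))"
      by (simp add: J'_def \<alpha>_def)
  qed
qed

end
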